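(* Let $N=U\oplus\langle 4\rangle\oplus E_8(2)$ and $N'=\langle 2\rangle\oplus U(2)\oplus E_8$. Then $$\mathcal{D}(N)/\mathrm{O}(N)\cong\mathcal{D}(N')/\mathrm{O}(N').$$
   Context: Lattice conventions: $U$ is the even unimodular lattice of signature $(1,1)$; $E_8$ is the negative definite root lattice; $\langle m\rangle$ is generated by a vector of norm $m$; $L(m)$ is $L$ with its bilinear form multiplied by the rational number $m$. For a lattice $N$ of signature $(2,n)$, $\mathcal{D}(N)=\{[\omega]\in\mathbb{P}(N\otimes\mathbb{C}) : \omega\cdot\omega=0,\ \omega\cdot\bar\omega>0\}$, with the action of the orthogonal group $\mathrm{O}(N)$. *)

theory Defs
  imports Complex_Main
begin

text \<open>Lattices of rank 11 are modelled as \<open>\<int>^11\<close> (coordinates indexed by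
  \<open>0..10\<close>, functions \<open>nat \<Rightarrow> _\<close> vanishing outside \<open>{..<11}\<close>) equipped with
  an integral symmetric Gram matrix \<open>G :: nat \<Rightarrow> nat \<Rightarrow> int\<close>.\<close>

definition rk :: nat where "rk = 11"

text \<open>E8 Dynkin diagram on nodes 3..10: chain 3-4-5-6-7-8-9, node 10 attached to 7
  (arms of lengths 4,2,1 at the branch node 7).\<close>
definition e8_edge :: "nat \<Rightarrow> nat \<Rightarrow> bool" where
  "e8_edge i j \<longleftrightarrow> (3 \<le> i \<and> i \<le> 8 \<and> j = i + 1) \<or> (3 \<le> j \<and> j \<le> 8 \<and> i = j + 1)
      \<or> (i = 7 \<and> j = 10) \<or> (i = 10 \<and> j = 7)"

definition in_e8 :: "nat \<Rightarrow> bool" where "in_e8 i \<longleftrightarrow> 3 \<le> i \<and> i \<le> 10"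

text \<open>Cartan matrix of E8 (positive definite); the negative definite lattice \<open>E_8\<close>
  has Gram matrix \<open>- cartan_E8\<close>.\<close>
definition cartan_E8 :: "nat \<Rightarrow> nat \<Rightarrow> int" where
  "cartan_E8 i j = (if i = j then 2 else if e8_edge i j then -1 else 0)"

text \<open>\<open>N = U \<oplus> \<langle>4\<rangle> \<oplus> E_8(2)\<close>: U on coordinates 0,1; \<open>\<langle>4\<rangle>\<close> on 2; \<open>E_8(2)\<close> on 3..10.\<close>
definition gramN :: "nat \<Rightarrow> nat \<Rightarrow> int" where
  "gramN i j =
    (if (i = 0 \<and> j = 1) \<or> (i = 1 \<and> j = 0) then 1
     else if i = 2 \<and> j = 2 then 4
     else if in_e8 i \<and> in_e8 j then - 2 * cartan_E8 i j
     else 0)"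

text \<open>\<open>N' = \<langle>2\<rangle> \<oplus> U(2) \<oplus> E_8\<close>: \<open>\<langle>2\<rangle>\<close> on 0; \<open>U(2)\<close> on 1,2; \<open>E_8\<close> on 3..10.\<close>
definition gramN' :: "nat \<Rightarrow> nat \<Rightarrow> int" where
  "gramN' i j =
    (if i = 0 \<and> j = 0 then 2
     else if (i = 1 \<and> j = 2) \<or> (i = 2 \<and> j = 1) then 2
     else if in_e8 i \<and> in_e8 j then - cartan_E8 i j
     else 0)"

definition bil :: "(nat \<Rightarrow> nat \<Rightarrow> int) \<Rightarrow> (nat \<Rightarrow> complex) \<Rightarrow> (nat \<Rightarrow> complex) \<Rightarrow> complex" where
  "bil G x y = (\<Sum>i<rk. \<Sum>j<rk. of_int (G i j) * x i * y j)"

definition supported :: "(nat \<Rightarrow> 'a::zero) \<Rightarrow> bool" where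
  "supported x \<longleftrightarrow> (\<forall>i\<ge>rk. x i = 0)"

definition matsupp :: "(nat \<Rightarrow> nat \<Rightarrow> 'a::zero) \<Rightarrow> bool" where
  "matsupp g \<longleftrightarrow> (\<forall>i j. rk \<le> i \<or> rk \<le> j \<longrightarrow> g i j = 0)"

definition matmul :: "(nat \<Rightarrow> nat \<Rightarrow> 'a::comm_semiring_1) \<Rightarrow> (nat \<Rightarrow> nat \<Rightarrow> 'a) \<Rightarrow> nat \<Rightarrow> nat \<Rightarrow> 'a" where
  "matmul a b = (\<lambda>i j. if i < rk \<and> j < rk then (\<Sum>k<rk. a i k * b k j) else 0)"

definition idmat :: "nat \<Rightarrow> nat \<Rightarrow> 'a::zero_neq_one" where
  "idmat = (\<lambda>i j. if i < rk \<and> i = j then 1 else 0)"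

definition Orth :: "(nat \<Rightarrow> nat \<Rightarrow> int) \<Rightarrow> (nat \<Rightarrow> nat \<Rightarrow> int) set" where
  "Orth G = {g. matsupp g \<and>
      (\<exists>h. matsupp h \<and> matmul g h = idmat \<and> matmul h g = idmat) \<and>
      (\<forall>i<rk. \<forall>j<rk. (\<Sum>k<rk. \<Sum>l<rk. g k i * G k l * g l j) = G i j)}"

definition act :: "(nat \<Rightarrow> nat \<Rightarrow> int) \<Rightarrow> (nat \<Rightarrow> complex) \<Rightarrow> nat \<Rightarrow> complex" where
  "act g x = (\<lambda>i. if i < rk then (\<Sum>j<rk. of_int (g i j) * x j) else 0)"

definition cact :: "(nat \<Rightarrow> nat \<Rightarrow> complex) \<Rightarrow> (nat \<Rightarrow> complex) \<Rightarrow> nat \<Rightarrow> complex" where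
  "cact A x = (\<lambda>i. if i < rk then (\<Sum>j<rk. A i j * x j) else 0)"

text \<open>Affine cone over the period domain \<open>\<D>(N)\<close>: vectors \<open>\<omega>\<close> with
  \<open>\<omega>\<cdot>\<omega> = 0\<close> and \<open>\<omega>\<cdot>\<omega>\<^sup>\<dagger> > 0\<close> (the latter is automatically real).
  Points of \<open>\<D>(N)\<close> are the lines \<open>[\<omega>]\<close> of such vectors.\<close>
definition Dcone :: "(nat \<Rightarrow> nat \<Rightarrow> int) \<Rightarrow> (nat \<Rightarrow> complex) set" where
  "Dcone G = {w. supported w \<and> bil G w w = 0 \<and> Re (bil G w (\<lambda>i. cnj (w i))) > 0}"

text \<open>\<open>[\<omega>]\<close> and \<open>[\<omega>']\<close> lie in the same \<open>O(N)\<close>-orbit of \<open>\<D>(N)\<close>.\<close>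
definition same_orbit :: "(nat \<Rightarrow> nat \<Rightarrow> int) \<Rightarrow> (nat \<Rightarrow> complex) \<Rightarrow> (nat \<Rightarrow> complex) \<Rightarrow> bool" where
  "same_orbit G w w' \<longleftrightarrow> (\<exists>g\<in>Orth G. \<exists>c::complex. c \<noteq> 0 \<and> w' = (\<lambda>i. c * act g w i))"

end

theory Submission
  imports Defs
begin


definition trp :: "(nat\<Rightarrow>nat\<Rightarrow>'a) \<Rightarrow> nat\<Rightarrow>nat\<Rightarrow>'a" where "trp M = (\<lambda>i j. M j i)"
definition ofm :: "(nat\<Rightarrow>nat\<Rightarrow>int) \<Rightarrow> nat\<Rightarrow>nat\<Rightarrow>complex" where "ofm g = (\<lambda>i j. of_int (g i j))"
definition smul :: "complex \<Rightarrow> (nat\<Rightarrow>nat\<Rightarrow>complex) \<Rightarrow> nat\<Rightarrow>nat\<Rightarrow>complex" where "smul c M = (\<lambda>i j. c * M i j)"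

lemma matmul_assoc: "matmul (matmul a b) c = matmul a (matmul b c)"
proof (intro ext)
  fix i j
  show "matmul (matmul a b) c i j = matmul a (matmul b c) i j"
  proof (cases "i < rk \<and> j < rk")
    case True
    have "(\<Sum>k<rk. (\<Sum>m<rk. a i m * b m k) * c k j) = (\<Sum>k<rk. \<Sum>m<rk. a i m * b m k * c k j)"
      by (simp add: sum_distrib_right)
    also have "\<dots> = (\<Sum>m<rk. \<Sum>k<rk. a i m * b m k * c k j)" by (rule sum.swap)
    also have "\<dots> = (\<Sum>m<rk. a i m * (\<Sum>k<rk. b m k * c k j))"
      by (simp add: sum_distrib_left mult.assoc)
    finally have "(\<Sum>k<rk. (\<Sum>m<rk. a i m * b m k) * c k j) = (\<Sum>m<rk. a i m * (\<Sum>k<rk. b m k * c k j))" .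
    then show ?thesis using True unfolding matmul_def by simp
  qed (auto simp: matmul_def)
qed

lemma matsupp_matmul: "matsupp (matmul a b)"
  unfolding matsupp_def matmul_def by auto

lemma matmul_id_left: "matsupp a \<Longrightarrow> matmul idmat a = a"
  unfolding matsupp_def matmul_def idmat_def
  by (auto intro!: ext simp: if_distrib[where f="\<lambda>x. x * _"] sum.delta cong: if_cong)

lemma matmul_id_right: "matsupp a \<Longrightarrow> matmul a idmat = a"
  unfolding matsupp_def matmul_def idmat_def
  by (auto intro!: ext simp: if_distrib[where f="\<lambda>x. _ * x"] sum.delta' cong: if_cong)

lemma trp_matmul: "trp (matmul a (b::nat\<Rightarrow>nat\<Rightarrow>'a::comm_semiring_1)) = matmul (trp b) (trp a)"
  unfolding trp_def matmul_def by (auto intro!: ext sum.cong simp: mult.commute)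

lemma trp_id: "trp idmat = idmat"
  unfolding trp_def idmat_def by (auto intro!: ext)

lemma matsupp_trp: "matsupp a \<Longrightarrow> matsupp (trp a)"
  unfolding trp_def matsupp_def by auto

lemma ofm_matmul: "ofm (matmul a b) = matmul (ofm a) (ofm b)"
  unfolding ofm_def matmul_def by (auto intro!: ext)

lemma ofm_trp: "ofm (trp a) = trp (ofm a)"
  unfolding ofm_def trp_def by auto

lemma ofm_id: "ofm idmat = idmat"
  unfolding ofm_def idmat_def by (auto intro!: ext)

lemma ofm_inj: "ofm a = ofm b \<Longrightarrow> a = b"
  unfolding ofm_def by (intro ext) (metis of_int_eq_iff)

lemma matsupp_ofm: "matsupp (ofm a) \<longleftrightarrow> matsupp a"
  unfolding ofm_def matsupp_def by auto

lemma smul_left: "matmul (smul c a) b = smul c (matmul a b)"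
  unfolding smul_def matmul_def by (auto intro!: ext simp: sum_distrib_left mult.assoc)

lemma smul_right: "matmul a (smul c b) = smul c (matmul a b)"
  unfolding smul_def matmul_def by (auto intro!: ext simp: sum_distrib_left mult.assoc mult.left_commute)

lemma smul_smul: "smul c (smul d a) = smul (c*d) a"
  unfolding smul_def by (auto simp: mult.assoc)

lemma smul_one: "smul 1 a = a" unfolding smul_def by simp

lemma cact_matmul: "cact (matmul a b) x = cact a (cact b x)"
proof (rule ext)
  fix i
  have "(\<Sum>j<rk. (\<Sum>k<rk. a i k * b k j) * x j) = (\<Sum>j<rk. \<Sum>k<rk. a i k * b k j * x j)"
    by (simp add: sum_distrib_right)
  also have "\<dots> = (\<Sum>k<rk. \<Sum>j<rk. a i k * b k j * x j)" by (rule sum.swap)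
  also have "\<dots> = (\<Sum>k<rk. a i k * (\<Sum>j<rk. b k j * x j))"
    by (simp add: sum_distrib_left mult.assoc)
  finally show "cact (matmul a b) x i = cact a (cact b x) i"
    unfolding cact_def matmul_def by simp
qed

lemma cact_id: "supported x \<Longrightarrow> cact idmat x = x"
  unfolding cact_def idmat_def supported_def
  by (auto intro!: ext simp: if_distrib[where f="\<lambda>x. x * _"] sum.delta cong: if_cong)

lemma act_cact: "act g x = cact (ofm g) x"
  unfolding act_def cact_def ofm_def by simp

lemma cact_scal: "cact a (\<lambda>i. c * x i) = (\<lambda>i. c * cact a x i)"
  unfolding cact_def by (auto intro!: ext simp: sum_distrib_left mult.left_commute)

lemma supported_cact: "supported (cact a x)"
  unfolding supported_def cact_def by auto

lemma orth_form: "(\<forall>i<rk. \<forall>j<rk. (\<Sum>k<rk. \<Sum>l<rk. g k i * G k l * g l j) = G i j) \<longleftrightarrow>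
   (\<forall>i<rk. \<forall>j<rk. matmul (matmul (trp g) G) g i j = G i j)"
proof -
  have "(\<Sum>k<rk. \<Sum>l<rk. g k i * G k l * g l j) = matmul (matmul (trp g) G) g i j" if "i<rk" "j<rk" for i j
  proof -
    have "matmul (matmul (trp g) G) g i j = (\<Sum>l<rk. \<Sum>k<rk. g k i * G k l * g l j)"
      using that unfolding matmul_def trp_def by (simp add: sum_distrib_right)
    also have "\<dots> = (\<Sum>k<rk. \<Sum>l<rk. g k i * G k l * g l j)" by (rule sum.swap)
    finally show ?thesis by simp
  qed
  then show ?thesis by auto
qed


lemma eq_matsupp: "matsupp M \<Longrightarrow> matsupp G \<Longrightarrow> (\<forall>i<rk. \<forall>j<rk. M i j = G i j) \<Longrightarrow> M = G"
  unfolding matsupp_def by (intro ext) (metis not_le)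

lemma Orth_iff: "matsupp G \<Longrightarrow> g \<in> Orth G \<longleftrightarrow> matsupp g \<and>
   (\<exists>h. matsupp h \<and> matmul g h = idmat \<and> matmul h g = idmat) \<and> matmul (matmul (trp g) G) g = G"
  unfolding Orth_def orth_form using eq_matsupp[OF matsupp_matmul] by auto

lemma orth_inv:
  assumes G: "matsupp G" and g: "g \<in> Orth G" and h: "matsupp h" "matmul g h = idmat" "matmul h g = idmat"
  shows "h \<in> Orth G"
proof -
  have f: "matmul (matmul (trp g) G) g = G" and gs: "matsupp g" using g G by (auto simp: Orth_iff)
  have "matmul (matmul (trp h) G) h = matmul (matmul (trp h) (matmul (matmul (trp g) G) g)) h" using f by simp
  also have "\<dots> = matmul (matmul (trp (matmul g h)) G) (matmul g h)" by (simp add: trp_matmul matmul_assoc)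
  also have "\<dots> = G" using h G by (simp add: trp_id matmul_id_left matmul_id_right)
  finally show ?thesis using h gs G by (auto simp: Orth_iff)
qed

lemma orth_GG:
  assumes G: "matsupp G" and g: "g \<in> Orth G" and h: "matsupp h" "matmul g h = idmat" "matmul h g = idmat"
  shows "matmul G g = matmul (trp h) G"
proof -
  have f: "matmul (matmul (trp g) G) g = G" and gs: "matsupp g" using g G by (auto simp: Orth_iff)
  have "matmul (trp h) G = matmul (trp h) (matmul (matmul (trp g) G) g)" using f by simp
  also have "\<dots> = matmul (matmul (trp (matmul g h)) G) g" by (simp add: trp_matmul matmul_assoc)
  also have "\<dots> = matmul G g" using h G by (simp add: trp_id matmul_id_left)
  finally show ?thesis by simp
qed

lemma tr_swap:
  fixes X Y G1 G2 :: "nat \<Rightarrow> nat \<Rightarrow> complex"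
  assumes XY: "matmul X Y = idmat" "matmul Y X = idmat" and G2: "matsupp G2"
    and F: "matmul (matmul (trp X) G2) X = smul c G1" and c: "c \<noteq> 0"
  shows "matmul (matmul (trp Y) G1) Y = smul (1/c) G2"
proof -
  have "G2 = matmul (matmul (trp (matmul X Y)) G2) (matmul X Y)"
    using XY G2 by (simp add: trp_id matmul_id_left matmul_id_right)
  also have "\<dots> = matmul (matmul (trp Y) (matmul (matmul (trp X) G2) X)) Y"
    by (simp add: trp_matmul matmul_assoc)
  also have "\<dots> = smul c (matmul (matmul (trp Y) G1) Y)"
    by (simp add: F smul_left smul_right)
  finally have "smul (1/c) G2 = smul (1/c) (smul c (matmul (matmul (trp Y) G1) Y))" by simp
  then show ?thesis using c by (simp add: smul_smul smul_one)
qed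

lemma conj_orth:
  fixes X Y :: "nat \<Rightarrow> nat \<Rightarrow> complex"
  assumes XY: "matmul X Y = idmat" "matmul Y X = idmat" and XYs: "matsupp X" and G1: "matsupp G1" and G2: "matsupp G2"
    and F: "matmul (matmul (trp X) (ofm G2)) X = smul c (ofm G1)" and c: "c \<noteq> 0"
    and g: "g \<in> Orth G1" and h: "matsupp h" "matmul g h = idmat" "matmul h g = idmat"
    and g2: "ofm g2 = matmul (matmul X (ofm g)) Y" and h2: "ofm h2 = matmul (matmul X (ofm h)) Y"
  shows "g2 \<in> Orth G2"
proof -
  have f: "matmul (matmul (trp g) G1) g = G1" and gs: "matsupp g" using g G1 by (auto simp: Orth_iff)
  have fc: "matmul (matmul (trp (ofm g)) (ofm G1)) (ofm g) = ofm G1"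
    using f by (metis ofm_matmul ofm_trp)
  have G2c: "matsupp (ofm G2)" using G2 by (simp add: matsupp_ofm)
  have T: "matmul (matmul (trp Y) (ofm G1)) Y = smul (1/c) (ofm G2)"
    by (rule tr_swap[OF XY G2c F c])
  have "matsupp (ofm g2)" unfolding g2 by (rule matsupp_matmul)
  hence s2: "matsupp g2" by (simp add: matsupp_ofm)
  have "matsupp (ofm h2)" unfolding h2 by (rule matsupp_matmul)
  hence sh2: "matsupp h2" by (simp add: matsupp_ofm)
  have "ofm (matmul g2 h2) = matmul (matmul X (matmul (ofm g) (matmul (matmul Y X) (ofm h)))) Y"
    by (simp add: ofm_matmul g2 h2 matmul_assoc)
  also have "\<dots> = matmul X Y" using XY XYs h by (simp add: matmul_id_right matmul_id_left matsupp_ofm ofm_matmul[symmetric] ofm_id)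
  finally have i1: "matmul g2 h2 = idmat" using XY by (metis ofm_id ofm_inj)
  have "ofm (matmul h2 g2) = matmul (matmul X (matmul (ofm h) (matmul (matmul Y X) (ofm g)))) Y"
    by (simp add: ofm_matmul g2 h2 matmul_assoc)
  also have "\<dots> = matmul X Y" using XY XYs h gs by (simp add: matmul_id_right matmul_id_left matsupp_ofm ofm_matmul[symmetric] ofm_id)
  finally have i2: "matmul h2 g2 = idmat" using XY by (metis ofm_id ofm_inj)
  have "ofm (matmul (matmul (trp g2) G2) g2) =
     matmul (matmul (trp Y) (matmul (matmul (trp (ofm g)) (matmul (matmul (trp X) (ofm G2)) X)) (ofm g))) Y"
    by (simp add: ofm_matmul ofm_trp g2 trp_matmul matmul_assoc)
  also have "\<dots> = smul c (matmul (matmul (trp Y) (ofm G1)) Y)"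
    by (simp add: F smul_left smul_right fc)
  also have "\<dots> = ofm G2" using c by (simp add: T smul_smul smul_one)
  finally have "matmul (matmul (trp g2) G2) g2 = G2" by (rule ofm_inj)
  then show ?thesis using s2 sh2 i1 i2 G2 by (auto simp: Orth_iff)
qed



lemma sum11: "(\<Sum>k<rk. f k) = f 0 + f 1 + f 2 + f 3 + f 4 + f 5 + f 6 + f 7 + f 8 + f 9 + f 10"
  by (simp add: rk_def eval_nat_numeral add.commute add.left_commute)

definition sg :: "nat \<Rightarrow> nat" where "sg i = (if i=0 then 2 else if i=1 then 0 else if i=2 then 1 else i)"
definition tg :: "nat \<Rightarrow> nat" where "tg i = (if i=2 then 0 else if i=0 then 1 else if i=1 then 2 else i)"
definition sc :: "nat \<Rightarrow> complex" where "sc i = (if i=1 \<or> i=2 then 1/2 else 1)"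
definition Am :: "nat \<Rightarrow> nat \<Rightarrow> complex" where "Am i j = (if i<rk \<and> j = sg i then sc i else 0)"
definition Bm :: "nat \<Rightarrow> nat \<Rightarrow> complex" where "Bm i j = (if j<rk \<and> i = sg j then 1/sc j else 0)"

lemma key: "(k<rk \<and> j = sg k) \<longleftrightarrow> (j<rk \<and> k = tg j)"
  unfolding sg_def tg_def rk_def by auto

lemma sg_lt: "i<rk \<Longrightarrow> sg i < rk" unfolding sg_def rk_def by auto
lemma tg_lt: "i<rk \<Longrightarrow> tg i < rk" unfolding tg_def rk_def by auto
lemma sg_tg: "sg (tg i) = i" unfolding sg_def tg_def by auto
lemma tg_sg: "tg (sg i) = i" unfolding sg_def tg_def by auto
lemma sc_nz: "sc i \<noteq> 0" unfolding sc_def by auto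

lemma Am_col: "k < rk \<Longrightarrow> Am k j = (if j<rk \<and> k = tg j then sc (tg j) else 0)"
  unfolding Am_def using key by auto

lemma Bm_row: "k < rk \<Longrightarrow> Bm i k = (if i<rk \<and> k = tg i then 1/sc (tg i) else 0)"
  unfolding Bm_def using key by auto

lemma rowA: "(\<Sum>k<rk. Am i k * f k) = (if i<rk then sc i * f (sg i) else 0)"
  unfolding Am_def using sg_lt by (auto simp: if_distrib[where f="\<lambda>x. x * _"] cong: if_cong)

lemma colA: "(\<Sum>k<rk. f k * Am k j) = (if j<rk then f (tg j) * sc (tg j) else 0)"
proof -
  have "(\<Sum>k<rk. f k * Am k j) = (\<Sum>k<rk. if k = tg j then (if j<rk then f k * sc (tg j) else 0) else 0)"
    by (rule sum.cong) (auto simp: Am_col)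
  then show ?thesis using tg_lt by simp
qed

lemma rowB: "(\<Sum>k<rk. Bm i k * f k) = (if i<rk then f (tg i) / sc (tg i) else 0)"
proof -
  have "(\<Sum>k<rk. Bm i k * f k) = (\<Sum>k<rk. if k = tg i then (if i<rk then f k / sc (tg i) else 0) else 0)"
    by (rule sum.cong) (auto simp: Bm_row)
  then show ?thesis using tg_lt by simp
qed

lemma colB: "(\<Sum>k<rk. f k * Bm k j) = (if j<rk then f (sg j) / sc j else 0)"
  unfolding Bm_def using sg_lt by (auto simp: if_distrib[where f="\<lambda>x. _ * x"] cong: if_cong)

lemma AB: "matmul Am Bm = idmat"
  unfolding matmul_def idmat_def
  apply (intro ext)
  apply (simp add: rowA)
  apply (auto simp: Bm_def sc_nz sg_lt)
  by (metis tg_sg)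

lemma BA: "matmul Bm Am = idmat"
  unfolding matmul_def idmat_def
  apply (intro ext)
  apply (simp add: colA)
  apply (auto simp: Bm_def sc_nz tg_lt sg_tg)
  done

lemma Ams: "matsupp Am" unfolding matsupp_def Am_def using sg_lt by (auto simp: not_le[symmetric])
lemma Bms: "matsupp Bm" unfolding matsupp_def Bm_def using sg_lt by (auto simp: not_le[symmetric])


lemma gramN_s: "matsupp gramN"
  unfolding matsupp_def gramN_def in_e8_def rk_def by auto
lemma gramN'_s: "matsupp gramN'"
  unfolding matsupp_def gramN'_def in_e8_def rk_def by auto

lemma entry_check: "i < rk \<Longrightarrow> j < rk \<Longrightarrow>
  of_int (gramN' (tg i) (tg j)) * sc (tg i) * sc (tg j) = (1/2::complex) * of_int (gramN i j)"
  unfolding rk_def tg_def sc_def gramN_def gramN'_def in_e8_def cartan_E8_def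
  by auto

lemma formA: "matmul (matmul (trp Am) (ofm gramN')) Am = smul (1/2) (ofm gramN)"
proof (rule eq_matsupp[OF matsupp_matmul])
  show "matsupp (smul (1/2) (ofm gramN))" using gramN_s unfolding matsupp_def smul_def ofm_def by auto
  show "\<forall>i<rk. \<forall>j<rk. matmul (matmul (trp Am) (ofm gramN')) Am i j = smul (1 / 2) (ofm gramN) i j"
  proof (intro allI impI)
    fix i j assume ij: "i<rk" "j<rk"
    have inner: "(\<Sum>k<rk. Am k i * ofm gramN' k l) = ofm gramN' (tg i) l * sc (tg i)" for l
      using colA[of "\<lambda>k. ofm gramN' k l" i] ij by (simp add: mult.commute)
    have "matmul (matmul (trp Am) (ofm gramN')) Am i j = (\<Sum>l<rk. (ofm gramN' (tg i) l * sc (tg i)) * Am l j)"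
      using ij unfolding matmul_def trp_def by (simp add: inner)
    also have "\<dots> = ofm gramN' (tg i) (tg j) * sc (tg i) * sc (tg j)"
      using colA[of "\<lambda>l. ofm gramN' (tg i) l * sc (tg i)" j] ij by simp
    also have "\<dots> = smul (1 / 2) (ofm gramN) i j"
      using entry_check[OF ij] unfolding smul_def ofm_def by simp
    finally show "matmul (matmul (trp Am) (ofm gramN')) Am i j = smul (1 / 2) (ofm gramN) i j" .
  qed
qed


lemma gramN_even: "2 \<le> j \<Longrightarrow> (2::int) dvd gramN l j"
  unfolding gramN_def by auto

lemma E1:
  assumes u: "u \<in> Orth gramN" and r: "r \<le> 1" and j: "2 \<le> j" "j < rk"
  shows "(2::int) dvd u r j"
proof -
  obtain h where h: "matsupp h" "matmul u h = idmat" "matmul h u = idmat" using u unfolding Orth_def by auto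
  have E: "matmul gramN u = matmul (trp h) gramN" by (rule orth_GG[OF gramN_s u h])
  have r1: "1 - r < rk" unfolding rk_def by simp
  have "matmul gramN u (1-r) j = u r j"
    using j r1 r unfolding matmul_def
    by (cases "r = 0") (auto simp: sum11 gramN_def in_e8_def le_Suc_eq)
  moreover have "2 dvd matmul (trp h) gramN (1-r) j"
    using j r1 unfolding matmul_def trp_def by (auto intro!: dvd_sum dvd_mult gramN_even)
  ultimately show ?thesis using E by simp
qed


lemma gramN'_even: "c = 1 \<or> c = 2 \<Longrightarrow> (2::int) dvd gramN' l c"
  unfolding gramN'_def in_e8_def by auto

lemma Qexp: "(\<Sum>k<rk. \<Sum>l<rk. x k * gramN' k l * x l) =
  2*x 0^2 + 4*x 1*x 2 - 2*(x 3^2+x 4^2+x 5^2+x 6^2+x 7^2+x 8^2+x 9^2+x 10^2)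
   + 2*(x 3*x 4+x 4*x 5+x 5*x 6+x 6*x 7+x 7*x 8+x 8*x 9+x 7*x 10)"
  by (simp add: sum11 gramN'_def cartan_E8_def e8_edge_def in_e8_def algebra_simps power2_eq_square)

lemma E8par:
  fixes x :: "nat \<Rightarrow> int"
  assumes "\<forall>r. 3 \<le> r \<and> r \<le> 10 \<longrightarrow> 2 dvd (\<Sum>l<rk. gramN' r l * x l)"
  shows "\<forall>l. 3 \<le> l \<and> l \<le> 10 \<longrightarrow> 2 dvd x l"
proof -
  have "2 dvd (\<Sum>l<rk. gramN' r l * x l)" if "r \<in> {3,4,5,6,7,8,9,10}" for r
    using assms that by auto
  hence d: "2 dvd (\<Sum>l<rk. gramN' 3 l * x l)" "2 dvd (\<Sum>l<rk. gramN' 4 l * x l)"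
    "2 dvd (\<Sum>l<rk. gramN' 5 l * x l)" "2 dvd (\<Sum>l<rk. gramN' 6 l * x l)"
    "2 dvd (\<Sum>l<rk. gramN' 7 l * x l)" "2 dvd (\<Sum>l<rk. gramN' 8 l * x l)"
    "2 dvd (\<Sum>l<rk. gramN' 9 l * x l)" "2 dvd (\<Sum>l<rk. gramN' 10 l * x l)" by auto
  note d' = d[simplified sum11 gramN'_def cartan_E8_def e8_edge_def in_e8_def, simplified]
  have "2 dvd x 3 \<and> 2 dvd x 4 \<and> 2 dvd x 5 \<and> 2 dvd x 6 \<and> 2 dvd x 7 \<and> 2 dvd x 8 \<and> 2 dvd x 9 \<and> 2 dvd x 10"
    using d' by presburger
  moreover have "l \<in> {3,4,5,6,7,8,9,10}" if "3 \<le> l \<and> l \<le> 10" for l :: nat using that by auto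
  ultimately show ?thesis by auto
qed


lemma E2:
  assumes u: "u \<in> Orth gramN'" and c: "c = 1 \<or> c = 2" and a: "a < rk" "a \<noteq> 1" "a \<noteq> 2"
  shows "(2::int) dvd u a c"
proof -
  obtain h where h: "matsupp h" "matmul u h = idmat" "matmul h u = idmat" using u unfolding Orth_def by auto
  have E: "matmul gramN' u = matmul (trp h) gramN'" by (rule orth_GG[OF gramN'_s u h])
  define x where "x l = u l c" for l
  have crk: "c < rk" using c unfolding rk_def by auto
  have par: "\<forall>r. 3 \<le> r \<and> r \<le> 10 \<longrightarrow> 2 dvd (\<Sum>l<rk. gramN' r l * x l)"
  proof (intro allI impI)
    fix r :: nat assume r: "3 \<le> r \<and> r \<le> 10"
    hence rr: "r < rk" unfolding rk_def by auto
    have "2 dvd matmul (trp h) gramN' r c"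
      using rr crk c unfolding matmul_def trp_def by (auto intro!: dvd_sum dvd_mult gramN'_even)
    hence "2 dvd matmul gramN' u r c" using E by simp
    then show "2 dvd (\<Sum>l<rk. gramN' r l * x l)" using rr crk unfolding matmul_def x_def by simp
  qed
  have ev: "\<forall>l. 3 \<le> l \<and> l \<le> 10 \<longrightarrow> 2 dvd x l" by (rule E8par[OF par])
  show ?thesis
  proof (cases "a = 0")
    case False
    then have "3 \<le> a \<and> a \<le> 10" using a unfolding rk_def by auto
    then show ?thesis using ev unfolding x_def by auto
  next
    case True
    have "(\<Sum>k<rk. \<Sum>l<rk. u k c * gramN' k l * u l c) = gramN' c c"
      using u crk unfolding Orth_def by auto
    also have "gramN' c c = 0" using c unfolding gramN'_def in_e8_def by auto
    finally have Q: "(\<Sum>k<rk. \<Sum>l<rk. x k * gramN' k l * x l) = 0" unfolding x_def .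
    have "2 dvd x 3" "2 dvd x 4" "2 dvd x 5" "2 dvd x 6" "2 dvd x 7" "2 dvd x 8" "2 dvd x 9" "2 dvd x 10"
      using ev by auto
    then obtain y3 y4 y5 y6 y7 y8 y9 y10 where y: "x 3 = 2*y3" "x 4 = 2*y4" "x 5 = 2*y5" "x 6 = 2*y6"
      "x 7 = 2*y7" "x 8 = 2*y8" "x 9 = 2*y9" "x 10 = 2*y10"
      by (meson dvdE)
    have "x 0 * x 0 = 2 * (- x 1 * x 2 + 2*(y3^2+y4^2+y5^2+y6^2+y7^2+y8^2+y9^2+y10^2)
       - 2*(y3*y4+y4*y5+y5*y6+y6*y7+y7*y8+y8*y9+y7*y10))"
      using Q unfolding Qexp y by (simp add: algebra_simps power2_eq_square)
    hence "even (x 0 * x 0)" by simp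
    hence "even (x 0)" by simp
    then show ?thesis using True unfolding x_def by simp
  qed
qed


definition Phi :: "(nat \<Rightarrow> nat \<Rightarrow> int) \<Rightarrow> nat \<Rightarrow> nat \<Rightarrow> int" where
  "Phi g a b = (if a<rk \<and> b<rk then
     (if (a=1\<or>a=2) \<and> \<not>(b=1\<or>b=2) then g (sg a) (sg b) div 2
      else if \<not>(a=1\<or>a=2) \<and> (b=1\<or>b=2) then 2 * g (sg a) (sg b) else g (sg a) (sg b)) else 0)"

definition Psi :: "(nat \<Rightarrow> nat \<Rightarrow> int) \<Rightarrow> nat \<Rightarrow> nat \<Rightarrow> int" where
  "Psi g a b = (if a<rk \<and> b<rk then
     (if (b=0\<or>b=1) \<and> \<not>(a=0\<or>a=1) then g (tg a) (tg b) div 2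
      else if \<not>(b=0\<or>b=1) \<and> (a=0\<or>a=1) then 2 * g (tg a) (tg b) else g (tg a) (tg b)) else 0)"

lemma div2c: "(2::int) dvd v \<Longrightarrow> (of_int (v div 2)::complex) = of_int v / 2"
  by (elim dvdE) simp

lemma PhiEq:
  assumes g: "g \<in> Orth gramN"
  shows "ofm (Phi g) = matmul (matmul Am (ofm g)) Bm"
proof (rule eq_matsupp)
  show "matsupp (ofm (Phi g))" unfolding matsupp_def ofm_def Phi_def by auto
  show "matsupp (matmul (matmul Am (ofm g)) Bm)" by (rule matsupp_matmul)
  show "\<forall>i<rk. \<forall>j<rk. ofm (Phi g) i j = matmul (matmul Am (ofm g)) Bm i j"
  proof (intro allI impI)
    fix a b assume ab: "a<rk" "b<rk"
    have inner: "matmul Am (ofm g) a l = sc a * ofm g (sg a) l" if "l<rk" for l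
      using that ab unfolding matmul_def by (simp add: rowA)
    have "matmul (matmul Am (ofm g)) Bm a b = (\<Sum>l<rk. (sc a * ofm g (sg a) l) * Bm l b)"
      using ab unfolding matmul_def[of "matmul Am (ofm g)" Bm] by (simp add: inner)
    also have "\<dots> = sc a * ofm g (sg a) (sg b) / sc b" using colB[of "\<lambda>l. sc a * ofm g (sg a) l" b] ab by simp
    finally have M: "matmul (matmul Am (ofm g)) Bm a b = sc a * ofm g (sg a) (sg b) / sc b" .
    show "ofm (Phi g) a b = matmul (matmul Am (ofm g)) Bm a b"
    proof (cases "(a=1\<or>a=2) \<and> \<not>(b=1\<or>b=2)")
      case True
      have "sg a \<le> 1" "2 \<le> sg b" "sg b < rk" using True ab sg_lt unfolding sg_def by auto
      hence "2 dvd g (sg a) (sg b)" using E1[OF g] by auto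
      then show ?thesis using True ab by (subst M) (auto simp: Phi_def ofm_def sc_def div2c)
    next
      case False
      then show ?thesis using ab by (subst M) (auto simp: Phi_def ofm_def sc_def)
    qed
  qed
qed

lemma PsiEq:
  assumes g: "g \<in> Orth gramN'"
  shows "ofm (Psi g) = matmul (matmul Bm (ofm g)) Am"
proof (rule eq_matsupp)
  show "matsupp (ofm (Psi g))" unfolding matsupp_def ofm_def Psi_def by auto
  show "matsupp (matmul (matmul Bm (ofm g)) Am)" by (rule matsupp_matmul)
  show "\<forall>i<rk. \<forall>j<rk. ofm (Psi g) i j = matmul (matmul Bm (ofm g)) Am i j"
  proof (intro allI impI)
    fix a b assume ab: "a<rk" "b<rk"
    have inner: "matmul Bm (ofm g) a l = ofm g (tg a) l / sc (tg a)" if "l<rk" for l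
      using that ab unfolding matmul_def by (simp add: rowB)
    have "matmul (matmul Bm (ofm g)) Am a b = (\<Sum>l<rk. (ofm g (tg a) l / sc (tg a)) * Am l b)"
      using ab unfolding matmul_def[of "matmul Bm (ofm g)" Am] by (simp add: inner)
    also have "\<dots> = ofm g (tg a) (tg b) / sc (tg a) * sc (tg b)"
      using colA[of "\<lambda>l. ofm g (tg a) l / sc (tg a)" b] ab by simp
    finally have M: "matmul (matmul Bm (ofm g)) Am a b = ofm g (tg a) (tg b) / sc (tg a) * sc (tg b)" .
    show "ofm (Psi g) a b = matmul (matmul Bm (ofm g)) Am a b"
    proof (cases "(b=0\<or>b=1) \<and> \<not>(a=0\<or>a=1)")
      case True
      have "tg b = 1 \<or> tg b = 2" "tg a < rk" "tg a \<noteq> 1" "tg a \<noteq> 2" using True ab tg_lt unfolding tg_def by auto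
      hence "2 dvd g (tg a) (tg b)" using E2[OF g] by auto
      then show ?thesis using True ab by (subst M) (auto simp: Psi_def ofm_def sc_def tg_def div2c)
    next
      case False
      then show ?thesis using ab by (subst M) (auto simp: Psi_def ofm_def sc_def tg_def)
    qed
  qed
qed



definition dot :: "(nat \<Rightarrow> complex) \<Rightarrow> (nat \<Rightarrow> complex) \<Rightarrow> complex" where
  "dot x y = (\<Sum>i<rk. x i * y i)"

lemma bil_dot: "bil G x y = dot x (cact (ofm G) y)"
  unfolding bil_def dot_def cact_def ofm_def
  by (simp add: sum_distrib_left mult.commute mult.left_commute)

lemma dot_cact: "dot (cact X x) z = dot x (cact (trp X) z)"
proof -
  have "dot (cact X x) z = (\<Sum>i<rk. \<Sum>j<rk. X i j * x j * z i)"
    unfolding dot_def cact_def by (simp add: sum_distrib_right)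
  also have "\<dots> = (\<Sum>j<rk. \<Sum>i<rk. X i j * x j * z i)" by (rule sum.swap)
  also have "\<dots> = dot x (cact (trp X) z)"
    unfolding dot_def cact_def trp_def by (simp add: sum_distrib_left mult.commute mult.left_commute)
  finally show ?thesis .
qed

lemma dot_smul: "dot x (cact (smul c M) y) = c * dot x (cact M y)"
  unfolding dot_def cact_def smul_def by (simp add: sum_distrib_left mult.commute mult.left_commute)

lemma bilA: "bil gramN' (cact Am x) (cact Am y) = (1/2) * bil gramN x y"
proof -
  have "bil gramN' (cact Am x) (cact Am y) = dot x (cact (trp Am) (cact (ofm gramN') (cact Am y)))"
    by (simp add: bil_dot dot_cact)
  also have "\<dots> = dot x (cact (matmul (matmul (trp Am) (ofm gramN')) Am) y)"
    by (simp add: cact_matmul)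
  also have "\<dots> = (1/2) * bil gramN x y" by (simp add: formA dot_smul bil_dot)
  finally show ?thesis .
qed

lemma cnj_cactA: "(\<lambda>i. cnj (cact Am w i)) = cact Am (\<lambda>i. cnj (w i))"
  unfolding cact_def by (auto intro!: ext sum.cong simp: Am_def sc_def)

lemma DconeA: "supported w \<Longrightarrow> (w \<in> Dcone gramN \<longleftrightarrow> cact Am w \<in> Dcone gramN')"
  unfolding Dcone_def by (auto simp: supported_cact cnj_cactA bilA)

lemma BAw: "supported w \<Longrightarrow> cact Bm (cact Am w) = w"
  by (metis BA cact_id cact_matmul)

theorem theorem6p2:
  shows "\<exists>A::nat \<Rightarrow> nat \<Rightarrow> complex.
     matsupp A \<and> (\<exists>B. matsupp B \<and> matmul A B = idmat \<and> matmul B A = idmat) \<and>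
     (\<forall>w. supported w \<longrightarrow> (w \<in> Dcone gramN \<longleftrightarrow> cact A w \<in> Dcone gramN')) \<and>
     (\<forall>w\<in>Dcone gramN. \<forall>w'\<in>Dcone gramN.
        same_orbit gramN w w' \<longleftrightarrow> same_orbit gramN' (cact A w) (cact A w'))"
proof (rule exI[of _ Am], intro conjI)
  show "matsupp Am" by (rule Ams)
  show "\<exists>B. matsupp B \<and> matmul Am B = idmat \<and> matmul B Am = idmat" using Bms AB BA by blast
  show "\<forall>w. supported w \<longrightarrow> (w \<in> Dcone gramN \<longleftrightarrow> cact Am w \<in> Dcone gramN')" using DconeA by blast
  show "\<forall>w\<in>Dcone gramN. \<forall>w'\<in>Dcone gramN.
        same_orbit gramN w w' \<longleftrightarrow> same_orbit gramN' (cact Am w) (cact Am w')"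
  proof (intro ballI)
  have F1: "matmul (matmul (trp Am) (ofm gramN')) Am = smul (1/2) (ofm gramN)" by (rule formA)
  have F2: "matmul (matmul (trp Bm) (ofm gramN)) Bm = smul (1/(1/2)) (ofm gramN')"
    by (rule tr_swap[OF AB BA _ F1]) (auto simp: matsupp_ofm gramN_s gramN'_s)
  fix w w' assume w: "w \<in> Dcone gramN" and w': "w' \<in> Dcone gramN"
  have sw: "supported w" and sw': "supported w'" using w w' unfolding Dcone_def by auto
  show "same_orbit gramN w w' \<longleftrightarrow> same_orbit gramN' (cact Am w) (cact Am w')"
  proof
    assume "same_orbit gramN w w'"
    then obtain g c where g: "g \<in> Orth gramN" and c: "c \<noteq> 0" and e: "w' = (\<lambda>i. c * act g w i)"
      unfolding same_orbit_def by auto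
    obtain h where h: "matsupp h" "matmul g h = idmat" "matmul h g = idmat" using g unfolding Orth_def by auto
    have hO: "h \<in> Orth gramN" by (rule orth_inv[OF gramN_s g h])
    have gO: "Phi g \<in> Orth gramN'"
      by (rule conj_orth[OF AB BA Ams gramN_s gramN'_s F1 _ g h PhiEq[OF g] PhiEq[OF hO]]) simp
    have "act (Phi g) (cact Am w) = cact (matmul (matmul Am (ofm g)) (matmul Bm Am)) w"
      by (simp add: act_cact PhiEq[OF g] cact_matmul)
    also have "\<dots> = cact Am (act g w)"
      by (simp add: BA matmul_id_right matsupp_matmul cact_matmul act_cact)
    finally have "cact Am w' = (\<lambda>i. c * act (Phi g) (cact Am w) i)"
      by (simp add: e cact_scal)
    then show "same_orbit gramN' (cact Am w) (cact Am w')"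
      unfolding same_orbit_def using gO c by blast
  next
    assume "same_orbit gramN' (cact Am w) (cact Am w')"
    then obtain g c where g: "g \<in> Orth gramN'" and c: "c \<noteq> 0"
       and e: "cact Am w' = (\<lambda>i. c * act g (cact Am w) i)"
      unfolding same_orbit_def by auto
    obtain h where h: "matsupp h" "matmul g h = idmat" "matmul h g = idmat" using g unfolding Orth_def by auto
    have hO: "h \<in> Orth gramN'" by (rule orth_inv[OF gramN'_s g h])
    have gO: "Psi g \<in> Orth gramN"
      by (rule conj_orth[OF BA AB Bms gramN'_s gramN_s F2 _ g h PsiEq[OF g] PsiEq[OF hO]]) simp
    have "w' = cact Bm (cact Am w')" using BAw[OF sw'] by simp
    also have "\<dots> = (\<lambda>i. c * cact Bm (act g (cact Am w)) i)" by (simp add: e cact_scal)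
    also have "cact Bm (act g (cact Am w)) = act (Psi g) w"
      by (simp add: act_cact PsiEq[OF g] cact_matmul)
    finally have "w' = (\<lambda>i. c * act (Psi g) w i)" .
    then show "same_orbit gramN w w'"
      unfolding same_orbit_def using gO c by blast
  qed
  qed
qed


end
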